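(* Assume the data-collection setting described in the context, and that Assumptions (A1) (sequential conditional exogeneity) and (A2) (linear blip) hold. Then for every episode $i\in\{1,\dots,n\}$ and every stage $j\in\{1,\dots,l\}$, \[ \mathbb{E}_{i-1}\Big[\Big(y_i-\sum_{j'=j}^l\theta_{j'}^T\phi_{j'}(X_{i,1:j'},T_{i,1:j'})\Big)\Big(\phi_j(X_{i,1:j},T_{i,1:j})-\mathbb{E}_{i,j-1}[\phi_j(X_{i,1:j},T_{i,1:j})]\Big)\Big]=0 . \]
   Context: Data: $n$ episodes of horizon $l$ are collected sequentially. Episode $i$ yields $Z_i=(X_{i,1},T_{i,1},\dots,X_{i,l},T_{i,l},y_i)$ with contexts $X_{i,j}\in\mathcal{X}$, treatments $T_{i,j}\in\mathcal{T}$ (where $\mathcal{T}$ contains a distinguished "no treatment" value $0$) and final outcome $y_i\in\mathcal{Y}\subset\mathbb{R}$. $X_{i,1}$ is drawn i.i.d. across episodes from a fixed distribution $P_X$; within episode $i$, $T_{i,j}$ is drawn by a known behavior policy $\pi_i$ based on $(X_{i,1:j},T_{i,1:j-1})$, and $\pi_i$ may depend on $Z_{1:i-1}$. Let $\mathcal{F}_{i-1}=\sigma(Z_{1:i-1})$ and $\mathcal{F}_{i,j-1}=\sigma(Z_{1:i-1},X_{i,1:j},T_{i,1:j-1})$, with $\mathcal{F}_{i,-1}=\mathcal{F}_{i-1}$; write $\mathbb{E}_{i-1}[\cdot]=\mathbb{E}[\cdot\mid\mathcal{F}_{i-1}]$ and $\mathbb{E}_{i,j-1}[\cdot]=\mathbb{E}[\cdot\mid\mathcal{F}_{i,j-1}]$.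 For a static treatment sequence $\tau_{1:l}$, $y(\tau_{1:l})$ denotes the potential outcome; the observed outcome is $y=y(T_{1:l})$. The following hold within every episode (conditionally on earlier episodes), with the same parameters across episodes. (A1) Sequential conditional exogeneity: for each $j=1,\dots,l$, $\{y(T_{1:j-1},\tau_{j:l}):\tau_{j:l}\in\mathcal{T}^{l-j+1}\}$ is independent of $T_j$ given $(T_{1:j-1},X_{1:j})$. The blip function is $\gamma_j(X_{1:j},T_{1:j}):=\mathbb{E}[y(T_{1:j},0_{j+1:l})-y(T_{1:j-1},0_{j:l})\mid X_{1:j},T_{1:j}]$. (A2) Linear blip: $\gamma_j(X_{1:j},T_{1:j})=\theta_j^T\phi_j(X_{1:j},T_{1:j})$ for unknown $\theta_j\in\mathbb{R}^d$ and known $\phi_j:\mathcal{X}^j\times\mathcal{T}^j\to\mathbb{R}^d$ with $\phi_j(x_{1:j},(\tau_{1:j-1},0))=\mathbf{0}$ for all $x_{1:j},\tau_{1:j-1}$. *)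

theory Defs
  imports "HOL-Probability.Probability"
begin

text \<open>Episodes are indexed 1..n, stages 1..l.  X i k, T i k : context / treatment of episode i at stage k.
  Y i tau : potential outcome of episode i under the static treatment sequence tau (only tau_1..tau_l
  matter; we always pass the restriction of tau to {1..l}).\<close>

definition splice :: "nat \<Rightarrow> (nat \<Rightarrow> 't) \<Rightarrow> (nat \<Rightarrow> 't) \<Rightarrow> nat \<Rightarrow> 't" where
  "splice j a b = (\<lambda>k. if k < j then a k else b k)"

text \<open>pot l Y T i j tau  is the random variable y_i(T_{i,1:j-1}, tau_{j:l}).\<close>
definition pot :: "nat \<Rightarrow> (nat \<Rightarrow> (nat \<Rightarrow> 't) \<Rightarrow> 'a \<Rightarrow> real) \<Rightarrow> (nat \<Rightarrow> nat \<Rightarrow> 'a \<Rightarrow> 't)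
    \<Rightarrow> nat \<Rightarrow> nat \<Rightarrow> (nat \<Rightarrow> 't) \<Rightarrow> 'a \<Rightarrow> real" where
  "pot l Y T i j tau = (\<lambda>\<omega>. Y i (restrict (splice j (\<lambda>k. T i k \<omega>) tau) {1..l}) \<omega>)"

text \<open>Observed outcome y_i = y_i(T_{i,1:l}) (consistency).\<close>
definition obs :: "nat \<Rightarrow> (nat \<Rightarrow> (nat \<Rightarrow> 't) \<Rightarrow> 'a \<Rightarrow> real) \<Rightarrow> (nat \<Rightarrow> nat \<Rightarrow> 'a \<Rightarrow> 't)
    \<Rightarrow> nat \<Rightarrow> 'a \<Rightarrow> real" where
  "obs l Y T i = (\<lambda>\<omega>. Y i (restrict (\<lambda>k. T i k \<omega>) {1..l}) \<omega>)"

definition phiv :: "(nat \<Rightarrow> (nat \<Rightarrow> 'x) \<Rightarrow> (nat \<Rightarrow> 't) \<Rightarrow> 'v) \<Rightarrow> nat \<Rightarrow> (nat \<Rightarrow> 'x) \<Rightarrow> (nat \<Rightarrow> 't) \<Rightarrow> 'v" where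
  "phiv \<phi> j x tau = \<phi> j (restrict x {1..j}) (restrict tau {1..j})"

definition hist :: "'a measure \<Rightarrow> 'x measure \<Rightarrow> 't measure \<Rightarrow> (nat \<Rightarrow> nat \<Rightarrow> 'a \<Rightarrow> 'x)
    \<Rightarrow> (nat \<Rightarrow> nat \<Rightarrow> 'a \<Rightarrow> 't) \<Rightarrow> (nat \<Rightarrow> 'a \<Rightarrow> real)
    \<Rightarrow> (nat \<times> nat) set \<Rightarrow> (nat \<times> nat) set \<Rightarrow> nat set \<Rightarrow> 'a measure" where
  "hist M SX ST X T y IX IT Iy = sigma (space M)
     ({X i k -` A \<inter> space M | i k A. (i, k) \<in> IX \<and> A \<in> sets SX}
    \<union> {T i k -` A \<inter> space M | i k A. (i, k) \<in> IT \<and> A \<in> sets ST}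
    \<union> {y i -` A \<inter> space M | i A. i \<in> Iy \<and> A \<in> sets (borel :: real measure)})"

definition past_idx :: "nat \<Rightarrow> nat \<Rightarrow> (nat \<times> nat) set" where
  "past_idx l i = {(i', k). 1 \<le> i' \<and> i' < i \<and> 1 \<le> k \<and> k \<le> l}"

text \<open>F_{i-1} = sigma(Z_{1:i-1}).\<close>
definition Fep where
  "Fep M SX ST X T y l i = hist M SX ST X T y (past_idx l i) (past_idx l i) {1..<i}"

text \<open>F_{i,j-1} = sigma(Z_{1:i-1}, X_{i,1:j}, T_{i,1:j-1}).\<close>
definition Fst where
  "Fst M SX ST X T y l i j = hist M SX ST X T y
     (past_idx l i \<union> {(i, k) | k. 1 \<le> k \<and> k \<le> j})
     (past_idx l i \<union> {(i, k) | k. 1 \<le> k \<and> k < j}) {1..<i}"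

text \<open>sigma(Z_{1:i-1}, X_{i,1:j}, T_{i,1:j}): the conditioning information of the blip function
  (within episode i, conditionally on earlier episodes).\<close>
definition Gst where
  "Gst M SX ST X T y l i j = hist M SX ST X T y
     (past_idx l i \<union> {(i, k) | k. 1 \<le> k \<and> k \<le> j})
     (past_idx l i \<union> {(i, k) | k. 1 \<le> k \<and> k \<le> j}) {1..<i}"

definition cond_indep :: "'a measure \<Rightarrow> 'a measure \<Rightarrow> 'a set set \<Rightarrow> 'a set set \<Rightarrow> bool" where
  "cond_indep M G A B \<longleftrightarrow> (\<forall>a\<in>A. \<forall>b\<in>B. AE \<omega> in M.
      real_cond_exp M G (indicator (a \<inter> b)) \<omega>
        = real_cond_exp M G (indicator a) \<omega> * real_cond_exp M G (indicator b) \<omega>)"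

end

theory Submission
  imports Defs
begin

lemma sfs: "prob_space M \<Longrightarrow> subalgebra M F \<Longrightarrow> sigma_finite_subalgebra M F"
  by (simp add: finite_measure_subalgebra.intro finite_measure_subalgebra_axioms.intro
      finite_measure_subalgebra_is_sigma_finite prob_space.axioms(1))

lemma iml: "A \<in> sets M \<Longrightarrow> integrable M f \<Longrightarrow> integrable M (\<lambda>x. indicator A x * f x :: real)"
  using integrable_mult_indicator[of A M f] by simp

lemma ci_step1:
  assumes P: "prob_space M" and sG: "subalgebra M G" and sA: "subalgebra M FA"
    and sB: "subalgebra M FB"
    and CI: "cond_indep M G (sets FA) (sets FB)"
    and a: "a \<in> sets FA"
    and c: "c \<in> sigma_sets (space M) {g \<inter> b | g b. g \<in> sets G \<and> b \<in> sets FB}"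
  shows "(LINT x:c|M. (indicator a x :: real)) = (LINT x:c|M. real_cond_exp M G (indicator a) x)"
proof -
  interpret prob_space M by fact
  interpret G: sigma_finite_subalgebra M G using sfs[OF P sG] .
  let ?S = "{g \<inter> b | g b. g \<in> sets G \<and> b \<in> sets FB}"
  have GM: "sets G \<subseteq> sets M" and BM: "sets FB \<subseteq> sets M" and AM: "sets FA \<subseteq> sets M"
    using sG sB sA by (auto simp: subalgebra_def)
  have aM: "a \<in> sets M" using a AM by auto
  have ia: "integrable M (indicator a :: _ \<Rightarrow> real)" using aM by (intro integrable_real_indicator) (auto simp: less_top[symmetric])
  have iI: "\<And>s. s \<in> sets M \<Longrightarrow> integrable M (indicator s :: _ \<Rightarrow> real)"
    by (intro integrable_real_indicator) (auto simp: less_top[symmetric])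
  have iE: "integrable M (real_cond_exp M G (indicator a))" using G.real_cond_exp_int(1)[OF ia] .
  have SM: "?S \<subseteq> sets M" using GM BM by auto
  have SP: "?S \<subseteq> Pow (space M)" using SM sets.sets_into_space by blast
  have stable: "Int_stable ?S"
  proof (rule Int_stableI)
    fix x y assume "x \<in> ?S" "y \<in> ?S"
    then obtain g b g' b' where "x = g \<inter> b" "g \<in> sets G" "b \<in> sets FB" "y = g' \<inter> b'" "g' \<in> sets G" "b' \<in> sets FB" by auto
    then show "x \<inter> y \<in> ?S"
      by (intro CollectI exI[of _ "g \<inter> g'"] exI[of _ "b \<inter> b'"]) auto
  qed
  have cM: "\<And>c. c \<in> sigma_sets (space M) ?S \<Longrightarrow> c \<in> sets M"
    using SM sets.sigma_sets_subset by blast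
  show ?thesis using stable SP c
  proof (induction rule: sigma_sets_induct_disjoint)
    case (basic c)
    then obtain g b where gb: "c = g \<inter> b" "g \<in> sets G" "b \<in> sets FB" by auto
    have gM: "g \<in> sets M" "b \<in> sets M" using gb GM BM by auto
    have gmeas: "indicator g \<in> borel_measurable G" using gb by auto
    have "(LINT x:c|M. (indicator a x :: real)) = (\<integral>x. indicator g x * (indicator (a \<inter> b) x :: real) \<partial>M)"
      unfolding set_lebesgue_integral_def gb by (intro Bochner_Integration.integral_cong) (auto split: split_indicator)
    also have "\<dots> = (\<integral>x. indicator g x * real_cond_exp M G (indicator (a \<inter> b)) x \<partial>M)"
      by (rule G.real_cond_exp_intg(2)[symmetric]) (use gM aM gmeas iI in \<open>auto intro!: iml\<close>)
    also have "\<dots> = (\<integral>x. (indicator g x * real_cond_exp M G (indicator a) x) * real_cond_exp M G (indicator b) x \<partial>M)"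
    proof (rule integral_cong_AE)
      show "AE x in M. indicator g x * real_cond_exp M G (indicator (a \<inter> b)) x =
          (indicator g x * real_cond_exp M G (indicator a) x) * real_cond_exp M G (indicator b) x"
      proof -
        have "AE x in M. real_cond_exp M G (indicator (a \<inter> b)) x = real_cond_exp M G (indicator a) x * real_cond_exp M G (indicator b) x"
          using CI a gb(3) unfolding cond_indep_def by blast
        then show ?thesis by eventually_elim simp
      qed
    qed (use gM in auto)
    also have "\<dots> = (\<integral>x. (indicator g x * real_cond_exp M G (indicator a) x) * indicator b x \<partial>M)"
    proof (rule G.real_cond_exp_intg(2))
      have "integrable M (\<lambda>x. indicator (g \<inter> b) x * real_cond_exp M G (indicator a) x)"
        using iE gM by (intro iml) auto
      moreover have "(\<lambda>x. (indicator g x * real_cond_exp M G (indicator a) x) * indicator b x) = (\<lambda>x. indicator (g \<inter> b) x * real_cond_exp M G (indicator a) x :: real)"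
        by (auto simp: fun_eq_iff split: split_indicator)
      ultimately show "integrable M (\<lambda>x. (indicator g x * real_cond_exp M G (indicator a) x) * indicator b x)" by simp
    qed (use gM gmeas in \<open>auto intro!: borel_measurable_times\<close>)
    also have "\<dots> = (LINT x:c|M. real_cond_exp M G (indicator a) x)"
      unfolding set_lebesgue_integral_def gb by (intro Bochner_Integration.integral_cong) (auto split: split_indicator)
    finally show ?case .
  next
    case empty
    then show ?case by (simp add: set_lebesgue_integral_def)
  next
    case (compl c)
    have cMM: "c \<in> sets M" using cM compl(1) .
    have d: "c \<inter> (space M - c) = {}" and u: "c \<union> (space M - c) = space M" using cMM sets.sets_into_space by auto
    have e1: "(LINT x:c \<union> (space M - c)|M. (indicator a x :: real)) = (LINT x:c|M. indicator a x) + (LINT x:(space M - c)|M. indicator a x)"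
      by (rule set_integral_Un[OF d]) (auto intro!: iml ia simp: set_integrable_def cMM)
    have e2: "(LINT x:c \<union> (space M - c)|M. real_cond_exp M G (indicator a) x) = (LINT x:c|M. real_cond_exp M G (indicator a) x) + (LINT x:(space M - c)|M. real_cond_exp M G (indicator a) x)"
      by (rule set_integral_Un[OF d]) (auto intro!: iml iE simp: set_integrable_def cMM)
    have e3: "(LINT x:space M|M. (indicator a x :: real)) = (LINT x:space M|M. real_cond_exp M G (indicator a) x)"
      using set_integral_space[OF ia] set_integral_space[OF iE] G.real_cond_exp_int(2)[OF ia] by simp
    show ?case using e1 e2 e3 compl(2) unfolding u by simp
  next
    case (union A)
    have AM: "\<And>i. A i \<in> sets M" using union(2) cM by auto
    have dj: "\<And>i j. i \<noteq> j \<Longrightarrow> A i \<inter> A j = {}" using union(1) unfolding disjoint_family_on_def by auto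
    have UM: "(\<Union>i. A i) \<in> sets M" using AM by auto
    have s1: "(LINT x:(\<Union>i. A i)|M. (indicator a x :: real)) = (\<Sum>i. (LINT x:(A i)|M. indicator a x))"
      apply (rule lebesgue_integral_countable_add[where A=A]) apply (rule AM) apply (erule dj) unfolding set_integrable_def by (rule integrable_mult_indicator[OF UM ia])
    have s2: "(LINT x:(\<Union>i. A i)|M. real_cond_exp M G (indicator a) x) = (\<Sum>i. (LINT x:(A i)|M. real_cond_exp M G (indicator a) x))"
      apply (rule lebesgue_integral_countable_add[where A=A]) apply (rule AM) apply (erule dj) unfolding set_integrable_def by (rule integrable_mult_indicator[OF UM iE])
    show ?case unfolding s1 s2 using union(3) by simp
  qed
qed

lemma convex_abs_real: "convex_on UNIV (abs :: real \<Rightarrow> real)"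
proof -
  have "convex_on UNIV (\<lambda>x::real. dist 0 x)" by (rule convex_on_dist) simp
  then show ?thesis by (simp add: dist_real_def)
qed

lemma cond_exp_L1:
  assumes P: "prob_space M" and sG: "subalgebra M G" and u: "integrable M u"
  shows "(\<integral>x. \<bar>real_cond_exp M G u x\<bar> \<partial>M) \<le> (\<integral>x. \<bar>u x\<bar> \<partial>M)"
proof -
  interpret prob_space M by fact
  interpret G: sigma_finite_subalgebra M G using sfs[OF P sG] .
  have J: "AE x in M. \<bar>real_cond_exp M G u x\<bar> \<le> real_cond_exp M G (\<lambda>x. \<bar>u x\<bar>) x"
    by (rule G.real_cond_exp_jensens_inequality(2)[where I=UNIV]) (use u convex_abs_real in auto)
  have "(\<integral>x. \<bar>real_cond_exp M G u x\<bar> \<partial>M) \<le> (\<integral>x. real_cond_exp M G (\<lambda>x. \<bar>u x\<bar>) x \<partial>M)"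
    by (rule integral_mono_AE) (use J u G.real_cond_exp_int(1)[OF u] G.real_cond_exp_int(1)[of "\<lambda>x. \<bar>u x\<bar>"] in auto)
  also have "\<dots> = (\<integral>x. \<bar>u x\<bar> \<partial>M)" using G.real_cond_exp_int(2)[of "\<lambda>x. \<bar>u x\<bar>"] u by auto
  finally show ?thesis .
qed

lemma ci_core:
  assumes P: "prob_space M" and sG: "subalgebra M G" and sA: "subalgebra M FA"
    and sB: "subalgebra M FB"
    and CI: "cond_indep M G (sets FA) (sets FB)"
    and f: "integrable M f" "f \<in> borel_measurable FA"
  shows "AE x in M. real_cond_exp M (sigma (space M) {g \<inter> b | g b. g \<in> sets G \<and> b \<in> sets FB}) f x
     = real_cond_exp M G f x"
proof -
  interpret prob_space M by fact
  interpret G: sigma_finite_subalgebra M G using sfs[OF P sG] .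
  let ?S = "{g \<inter> b | g b. g \<in> sets G \<and> b \<in> sets FB}"
  let ?H = "sigma (space M) ?S"
  have GM: "sets G \<subseteq> sets M" and BM: "sets FB \<subseteq> sets M" and AM: "sets FA \<subseteq> sets M"
    using sG sB sA by (auto simp: subalgebra_def)
  have SM: "?S \<subseteq> sets M" using GM BM by auto
  have SP: "?S \<subseteq> Pow (space M)" using SM sets.sets_into_space by blast
  have setsH: "sets ?H = sigma_sets (space M) ?S" using SP by (simp add: sets_measure_of)
  have spaceH: "space ?H = space M" using SP by (simp add: space_measure_of_conv)
  have subH: "subalgebra M ?H" unfolding subalgebra_def setsH spaceH
    using SM sets.sigma_sets_subset by blast
  interpret H: sigma_finite_subalgebra M ?H using sfs[OF P subH] .
  have GH: "sets G \<subseteq> sets ?H"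
  proof
    fix g assume g: "g \<in> sets G"
    have "space M \<in> sets FB" using sB by (metis sets.top subalgebra_def)
    moreover have "g = g \<inter> space M" using g GM sets.sets_into_space by blast
    ultimately have "g \<in> ?S" using g by blast
    then show "g \<in> sets ?H" unfolding setsH by blast
  qed
  have subHG: "subalgebra ?H G" using sG GH spaceH by (simp add: subalgebra_def)
  have iI: "\<And>s. s \<in> sets M \<Longrightarrow> integrable M (indicator s :: _ \<Rightarrow> real)"
    by (intro integrable_real_indicator) (auto simp: less_top[symmetric])
  have step2: "(\<integral>x. indicator c x * f x \<partial>M) = (\<integral>x. indicator c x * real_cond_exp M G f x \<partial>M)"
    if c: "c \<in> sets ?H" for c
  proof -
    have cM: "c \<in> sets M" using c subH by (auto simp: subalgebra_def)
    have "integrable (restr_to_subalg M FA) f" using integrable_in_subalg[OF sA f(2) f(1)] .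
    then show ?thesis
    proof (induction rule: integrable_induct)
      case (base A r)
      have A: "A \<in> sets FA" using base(1) sets_restr_to_subalg[OF sA] by auto
      have AM': "A \<in> sets M" using A AM by auto
      have s1: "(LINT x:c|M. (indicator A x :: real)) = (LINT x:c|M. real_cond_exp M G (indicator A) x)"
        by (rule ci_step1[OF P sG sA sB CI A]) (use c setsH in simp)
      have ae: "AE x in M. real_cond_exp M G (\<lambda>x. r * indicator A x) x = r * real_cond_exp M G (indicator A) x"
        using G.real_cond_exp_cmult[OF iI[OF AM'], of r] by simp
      have "(\<integral>x. indicator c x * (indicator A x *\<^sub>R r) \<partial>M) = r * (LINT x:c|M. (indicator A x :: real))"
        unfolding set_lebesgue_integral_def by (simp add: mult_ac)
      also have "\<dots> = r * (LINT x:c|M. real_cond_exp M G (indicator A) x)" using s1 by simp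
      also have "\<dots> = (\<integral>x. indicator c x * (r * real_cond_exp M G (indicator A) x) \<partial>M)"
        unfolding set_lebesgue_integral_def by (simp add: mult_ac)
      also have "\<dots> = (\<integral>x. indicator c x * real_cond_exp M G (\<lambda>x. indicator A x *\<^sub>R r) x \<partial>M)"
        by (rule integral_cong_AE) (use ae cM in \<open>auto simp: mult.commute elim!: AE_mp\<close>)
      finally show ?case .
    next
      case (add u v)
      have u: "integrable M u" by (rule integrable_from_subalg[OF sA], rule add)
      have v: "integrable M v" by (rule integrable_from_subalg[OF sA], rule add)
      have Eu: "integrable M (real_cond_exp M G u)" using G.real_cond_exp_int(1)[OF u] .
      have Ev: "integrable M (real_cond_exp M G v)" using G.real_cond_exp_int(1)[OF v] .
      have ae: "AE x in M. real_cond_exp M G (\<lambda>x. u x + v x) x = real_cond_exp M G u x + real_cond_exp M G v x"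
        using G.real_cond_exp_add[OF u v] .
      have "(\<integral>x. indicator c x * (u x + v x) \<partial>M) = (\<integral>x. indicator c x * u x + indicator c x * v x \<partial>M)"
        by (simp only: distrib_left)
      also have "\<dots> = (\<integral>x. indicator c x * u x \<partial>M) + (\<integral>x. indicator c x * v x \<partial>M)"
        by (rule Bochner_Integration.integral_add[OF iml[OF cM u] iml[OF cM v]])
      also have "\<dots> = (\<integral>x. indicator c x * real_cond_exp M G u x \<partial>M) + (\<integral>x. indicator c x * real_cond_exp M G v x \<partial>M)"
      proof -
        have "(\<integral>x. indicator c x * u x \<partial>M) = (\<integral>x. indicator c x * real_cond_exp M G u x \<partial>M)" by (rule add)
        moreover have "(\<integral>x. indicator c x * v x \<partial>M) = (\<integral>x. indicator c x * real_cond_exp M G v x \<partial>M)" by (rule add)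
        ultimately show ?thesis by simp
      qed
      also have "\<dots> = (\<integral>x. indicator c x * real_cond_exp M G u x + indicator c x * real_cond_exp M G v x \<partial>M)"
        by (rule Bochner_Integration.integral_add[OF iml[OF cM Eu] iml[OF cM Ev], symmetric])
      also have "\<dots> = (\<integral>x. indicator c x * real_cond_exp M G (\<lambda>x. u x + v x) x \<partial>M)"
      proof (rule integral_cong_AE)
        show "AE x in M. indicator c x * real_cond_exp M G u x + indicator c x * real_cond_exp M G v x = indicator c x * real_cond_exp M G (\<lambda>x. u x + v x) x"
          using ae by eventually_elim (simp add: distrib_left)
      qed (use cM in auto)
      finally show ?case .
    next
      case (lim g s)
      have si: "\<And>i. integrable M (s i)" by (rule integrable_from_subalg[OF sA], rule lim)
      have g: "integrable M g" by (rule integrable_from_subalg[OF sA], rule lim)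
      have sp: "(\<lambda>i. s i x) \<longlonglongrightarrow> g x" if x: "x \<in> space M" for x
        by (rule lim) (use x in \<open>simp add: space_restr_to_subalg\<close>)
      have sb: "norm (s i x) \<le> 2 * norm (g x)" if x: "x \<in> space M" for i x
        by (rule lim) (use x in \<open>simp add: space_restr_to_subalg\<close>)
      have L1: "(\<lambda>i. \<integral>x. indicator c x * s i x \<partial>M) \<longlonglongrightarrow> (\<integral>x. indicator c x * g x \<partial>M)"
      proof (rule integral_dominated_convergence[where w="\<lambda>x. 2 * norm (g x)"])
        show "AE x in M. (\<lambda>i. indicator c x * s i x) \<longlonglongrightarrow> indicator c x * g x"
          using sp by (auto intro!: tendsto_mult)
        show "AE x in M. norm (indicator c x * s i x) \<le> 2 * norm (g x)" for i
          using sb by (auto simp: abs_mult indicator_def)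
      qed (use si g cM in auto)
      have D: "(\<lambda>i. \<integral>x. \<bar>s i x - g x\<bar> \<partial>M) \<longlonglongrightarrow> (\<integral>x. 0 \<partial>M)"
      proof (rule integral_dominated_convergence[where w="\<lambda>x. 3 * norm (g x)"])
        show "AE x in M. (\<lambda>i. \<bar>s i x - g x\<bar>) \<longlonglongrightarrow> 0"
        proof (rule AE_I2)
          fix x assume x: "x \<in> space M"
          have "(\<lambda>i. s i x - g x) \<longlonglongrightarrow> g x - g x" using sp[OF x] by (intro tendsto_diff) auto
          then have "(\<lambda>i. \<bar>s i x - g x\<bar>) \<longlonglongrightarrow> \<bar>g x - g x\<bar>" by (rule tendsto_rabs)
          then show "(\<lambda>i. \<bar>s i x - g x\<bar>) \<longlonglongrightarrow> 0" by simp
        qed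
        show "AE x in M. norm (\<bar>s i x - g x\<bar>) \<le> 3 * norm (g x)" for i
        proof (rule AE_I2)
          fix x assume "x \<in> space M"
          then have "\<bar>s i x\<bar> \<le> 2 * \<bar>g x\<bar>" using sb by simp
          then show "norm (\<bar>s i x - g x\<bar>) \<le> 3 * norm (g x)" by simp
        qed
      qed (use si g in auto)
      have L2: "(\<lambda>i. \<integral>x. indicator c x * real_cond_exp M G (s i) x \<partial>M) \<longlonglongrightarrow> (\<integral>x. indicator c x * real_cond_exp M G g x \<partial>M)"
      proof -
        have "(\<lambda>i. (\<integral>x. indicator c x * real_cond_exp M G (s i) x \<partial>M) - (\<integral>x. indicator c x * real_cond_exp M G g x \<partial>M)) \<longlonglongrightarrow> 0"
        proof (rule Lim_null_comparison)
          show "(\<lambda>i. \<integral>x. \<bar>s i x - g x\<bar> \<partial>M) \<longlonglongrightarrow> 0" using D by simp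
          show "\<forall>\<^sub>F i in sequentially. norm ((\<integral>x. indicator c x * real_cond_exp M G (s i) x \<partial>M) - (\<integral>x. indicator c x * real_cond_exp M G g x \<partial>M)) \<le> (\<integral>x. \<bar>s i x - g x\<bar> \<partial>M)"
          proof (intro always_eventually allI)
            fix i
            have isg: "integrable M (\<lambda>x. s i x - g x)" using si g by auto
            have ae: "AE x in M. real_cond_exp M G (\<lambda>x. s i x - g x) x = real_cond_exp M G (s i) x - real_cond_exp M G g x"
              using G.real_cond_exp_diff[OF si g] .
            have "(\<integral>x. indicator c x * real_cond_exp M G (s i) x \<partial>M) - (\<integral>x. indicator c x * real_cond_exp M G g x \<partial>M)
                = (\<integral>x. indicator c x * (real_cond_exp M G (s i) x - real_cond_exp M G g x) \<partial>M)"
              by (simp add: right_diff_distrib iml[OF cM G.real_cond_exp_int(1)[OF si]] iml[OF cM G.real_cond_exp_int(1)[OF g]])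
            also have "\<dots> = (\<integral>x. indicator c x * real_cond_exp M G (\<lambda>x. s i x - g x) x \<partial>M)"
              by (rule integral_cong_AE) (use ae cM in \<open>auto elim!: AE_mp\<close>)
            finally have eq: "(\<integral>x. indicator c x * real_cond_exp M G (s i) x \<partial>M) - (\<integral>x. indicator c x * real_cond_exp M G g x \<partial>M)
                = (\<integral>x. indicator c x * real_cond_exp M G (\<lambda>x. s i x - g x) x \<partial>M)" .
            have "norm (\<integral>x. indicator c x * real_cond_exp M G (\<lambda>x. s i x - g x) x \<partial>M) \<le> (\<integral>x. norm (indicator c x * real_cond_exp M G (\<lambda>x. s i x - g x) x) \<partial>M)"
              by (rule integral_norm_bound)
            also have "\<dots> \<le> (\<integral>x. \<bar>real_cond_exp M G (\<lambda>x. s i x - g x) x\<bar> \<partial>M)"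
            proof (rule integral_mono)
              show "integrable M (\<lambda>x. norm (indicator c x * real_cond_exp M G (\<lambda>x. s i x - g x) x))"
                using iml[OF cM G.real_cond_exp_int(1)[OF isg]] by (rule integrable_norm)
              show "integrable M (\<lambda>x. \<bar>real_cond_exp M G (\<lambda>x. s i x - g x) x\<bar>)"
                using G.real_cond_exp_int(1)[OF isg] by (rule integrable_abs)
              show "norm (indicator c x * real_cond_exp M G (\<lambda>x. s i x - g x) x) \<le> \<bar>real_cond_exp M G (\<lambda>x. s i x - g x) x\<bar>" for x
                by (auto simp: abs_mult indicator_def)
            qed
            also have "\<dots> \<le> (\<integral>x. \<bar>s i x - g x\<bar> \<partial>M)" by (rule cond_exp_L1[OF P sG isg])
            finally show "norm ((\<integral>x. indicator c x * real_cond_exp M G (s i) x \<partial>M) - (\<integral>x. indicator c x * real_cond_exp M G g x \<partial>M)) \<le> (\<integral>x. \<bar>s i x - g x\<bar> \<partial>M)"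
              unfolding eq .
          qed
        qed
        then show ?thesis by (subst Lim_null)
      qed
      have "(\<lambda>i. \<integral>x. indicator c x * s i x \<partial>M) = (\<lambda>i. \<integral>x. indicator c x * real_cond_exp M G (s i) x \<partial>M)"
        by (intro ext) (rule lim)
      then have "(\<lambda>i. \<integral>x. indicator c x * s i x \<partial>M) \<longlonglongrightarrow> (\<integral>x. indicator c x * real_cond_exp M G g x \<partial>M)"
        using L2 by simp
      then show ?case using L1 LIMSEQ_unique by blast
    qed
  qed
  show ?thesis
  proof (rule H.real_cond_exp_charact)
    fix c assume c: "c \<in> sets ?H"
    show "(LINT x:c|M. f x) = (LINT x:c|M. real_cond_exp M G f x)"
      using step2[OF c] unfolding set_lebesgue_integral_def by simp
  next
    show "integrable M f" by fact
    show "integrable M (real_cond_exp M G f)" using G.real_cond_exp_int(1)[OF f(1)] .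
    show "real_cond_exp M G f \<in> borel_measurable ?H"
      by (rule measurable_from_subalg[OF subHG]) simp
  qed
qed

definition sqi :: "'a measure \<Rightarrow> ('a \<Rightarrow> real) \<Rightarrow> bool" where
  "sqi M f \<longleftrightarrow> f \<in> borel_measurable M \<and> integrable M (\<lambda>x. (f x)\<^sup>2)"

lemma sqiI: "f \<in> borel_measurable M \<Longrightarrow> integrable M (\<lambda>x. (f x)\<^sup>2) \<Longrightarrow> sqi M f"
  by (simp add: sqi_def)

lemma sqi_meas: "sqi M f \<Longrightarrow> f \<in> borel_measurable M" by (simp add: sqi_def)

lemma ab_le: "\<bar>a * b\<bar> \<le> a\<^sup>2 + (b::real)\<^sup>2"
proof -
  have "0 \<le> (\<bar>a\<bar> - \<bar>b\<bar>)\<^sup>2" by simp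
  then have "2 * \<bar>a\<bar> * \<bar>b\<bar> \<le> \<bar>a\<bar>\<^sup>2 + \<bar>b\<bar>\<^sup>2" by (simp add: power2_diff)
  moreover have "\<bar>a\<bar>\<^sup>2 = a\<^sup>2" "\<bar>b\<bar>\<^sup>2 = b\<^sup>2" by simp_all
  moreover have "\<bar>a * b\<bar> = \<bar>a\<bar> * \<bar>b\<bar>" by (simp add: abs_mult)
  moreover have "0 \<le> \<bar>a\<bar> * \<bar>b\<bar>" by simp
  ultimately show ?thesis by linarith
qed

lemma sqi_mult_int:
  assumes "sqi M f" "sqi M g" shows "integrable M (\<lambda>x. f x * g x)"
proof (rule Bochner_Integration.integrable_bound[where f="\<lambda>x. (f x)\<^sup>2 + (g x)\<^sup>2"])
  show "integrable M (\<lambda>x. (f x)\<^sup>2 + (g x)\<^sup>2)" using assms by (auto simp: sqi_def)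
  show "(\<lambda>x. f x * g x) \<in> borel_measurable M" using assms by (auto simp: sqi_def)
  show "AE x in M. norm (f x * g x) \<le> norm ((f x)\<^sup>2 + (g x)\<^sup>2)"
  proof (rule AE_I2)
    fix x
    have "norm (f x * g x) \<le> (f x)\<^sup>2 + (g x)\<^sup>2" using ab_le[of "f x" "g x"] by simp
    also have "\<dots> = norm ((f x)\<^sup>2 + (g x)\<^sup>2)" by simp
    finally show "norm (f x * g x) \<le> norm ((f x)\<^sup>2 + (g x)\<^sup>2)" .
  qed
qed

lemma sqi_add: assumes "sqi M f" "sqi M g" shows "sqi M (\<lambda>x. f x + g x)"
proof (rule sqiI)
  show "(\<lambda>x. f x + g x) \<in> borel_measurable M" using assms by (auto simp: sqi_def)
  have "integrable M (\<lambda>x. (f x)\<^sup>2 + (g x)\<^sup>2 + 2 * (f x * g x))"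
    using assms sqi_mult_int[OF assms] by (auto simp: sqi_def)
  then show "integrable M (\<lambda>x. (f x + g x)\<^sup>2)" by (simp add: power2_sum mult.assoc)
qed

lemma sqi_cmult: assumes "sqi M f" shows "sqi M (\<lambda>x. c * f x)"
  using assms by (auto simp: sqi_def power_mult_distrib)

lemma sqi_uminus: assumes "sqi M f" shows "sqi M (\<lambda>x. - f x)"
  using sqi_cmult[OF assms, of "-1"] by simp

lemma sqi_diff: assumes "sqi M f" "sqi M g" shows "sqi M (\<lambda>x. f x - g x)"
  using sqi_add[OF assms(1) sqi_uminus[OF assms(2)]] by simp

lemma sqi_sum: assumes "\<And>k. k \<in> I \<Longrightarrow> sqi M (f k)" shows "sqi M (\<lambda>x. \<Sum>k\<in>I. f k x)"
  using assms
proof (induction I rule: infinite_finite_induct)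
  case (infinite A) then show ?case by (simp add: sqi_def)
next
  case empty then show ?case by (simp add: sqi_def)
next
  case (insert a A)
  then show ?case by (simp add: sqi_add)
qed

lemma sqi_ind: assumes "sqi M f" "B \<in> sets M" shows "sqi M (\<lambda>x. indicator B x * f x)"
proof (rule sqiI)
  show "(\<lambda>x. indicator B x * f x) \<in> borel_measurable M" using assms by (auto simp: sqi_def)
  have "integrable M (\<lambda>x. indicator B x * (f x)\<^sup>2)" using assms by (intro iml) (auto simp: sqi_def)
  then show "integrable M (\<lambda>x. (indicator B x * f x)\<^sup>2)"
    by (rule back_subst[where P="integrable M"]) (auto simp: fun_eq_iff power_mult_distrib indicator_def)
qed

lemma sqi_int: assumes "prob_space M" "sqi M f" shows "integrable M f"
proof -
  interpret prob_space M by fact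
  have "integrable M (\<lambda>x. f x * 1)"
    by (rule sqi_mult_int[OF assms(2)]) (simp add: sqi_def)
  then show ?thesis by simp
qed

lemma sqi_cond_exp: assumes P: "prob_space M" and s: "subalgebra M F" and f: "sqi M f"
  shows "sqi M (real_cond_exp M F f)"
proof -
  interpret prob_space M by fact
  interpret F: sigma_finite_subalgebra M F using sfs[OF P s] .
  have fi: "integrable M f" using sqi_int[OF P f] .
  have f2: "integrable M (\<lambda>x. (f x)\<^sup>2)" using f by (simp add: sqi_def)
  have "integrable M (\<lambda>x. (\<lambda>y. y\<^sup>2) (real_cond_exp M F f x))"
  proof (rule F.integrable_convex_cond_exp[where I=UNIV and q="\<lambda>y. y\<^sup>2" and a=0 and b=0])
    show "integrable M f" by (fact fi)
    show "AE x in M. f x \<in> UNIV" by simp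
    show "UNIV = {0<..<0::real} \<or> UNIV = {0<..} \<or> UNIV = {..<0} \<or> UNIV = (UNIV::real set)" by simp
    show "integrable M (\<lambda>x. (f x)\<^sup>2)" by (fact f2)
    show "convex_on UNIV (\<lambda>y::real. y\<^sup>2)" by (rule convex_power2)
    show "(\<lambda>y::real. y\<^sup>2) \<in> borel_measurable borel" by simp
    show "emeasure M (space M) = \<infinity> \<Longrightarrow> 0 \<in> UNIV" by simp
  qed
  then show ?thesis by (intro sqiI) simp_all
qed

lemma subalg_trans: "subalgebra M F \<Longrightarrow> subalgebra F G \<Longrightarrow> subalgebra M G"
  by (auto simp: subalgebra_def)

lemma abstract_main:
  fixes M Fp Fs H :: "'a measure" and G :: "nat \<Rightarrow> 'a measure" and p gam :: "nat \<Rightarrow> 'a \<Rightarrow> real"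
    and pc y0 :: "'a \<Rightarrow> real"
  assumes P: "prob_space M"
    and sFs: "subalgebra M Fs" and sFp: "subalgebra Fs Fp" and sH: "subalgebra M H" and sHF: "subalgebra H Fs"
    and sG: "\<And>k. k \<in> {j..l} \<Longrightarrow> subalgebra M (G k)" and sGF: "\<And>k. k \<in> {j..l} \<Longrightarrow> subalgebra (G k) Fs"
    and pcG: "\<And>k. k \<in> {j..l} \<Longrightarrow> pc \<in> borel_measurable (G k)" and pcH: "pc \<in> borel_measurable H"
    and pcL: "sqi M pc"
    and pL: "\<And>k. k \<in> {j..Suc l} \<Longrightarrow> sqi M (p k)"
    and gL: "\<And>k. k \<in> {j..l} \<Longrightarrow> sqi M (gam k)"
    and A2: "\<And>k. k \<in> {j..l} \<Longrightarrow> AE x in M. real_cond_exp M (G k) (\<lambda>x. p (Suc k) x - p k x) x = gam k x"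
    and CIc: "AE x in M. real_cond_exp M H (p j) x = real_cond_exp M Fs (p j) x"
    and y0: "\<And>x. y0 x = p (Suc l) x"
    and jl: "j \<le> l"
  shows "AE x in M. real_cond_exp M Fp (\<lambda>x. (y0 x - (\<Sum>k\<in>{j..l}. gam k x)) * (pc x - real_cond_exp M Fs pc x)) x = 0"
proof -
  interpret prob_space M by fact
  have sFpM: "subalgebra M Fp" using subalg_trans[OF sFs sFp] .
  interpret Fp: sigma_finite_subalgebra M Fp using sfs[OF P sFpM] .
  interpret Fs: sigma_finite_subalgebra M Fs using sfs[OF P sFs] .
  interpret H: sigma_finite_subalgebra M H using sfs[OF P sH] .
  define e where "e = real_cond_exp M Fs pc"
  define ep where "ep = real_cond_exp M Fs (p j)"
  have eL: "sqi M e" unfolding e_def by (rule sqi_cond_exp[OF P sFs pcL])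
  have epL: "sqi M ep" unfolding ep_def by (rule sqi_cond_exp[OF P sFs pL]) (use jl in auto)
  have pjL: "sqi M (p j)" using pL jl by auto
  have eFs: "e \<in> borel_measurable Fs" unfolding e_def by simp
  have epFs: "ep \<in> borel_measurable Fs" unfolding ep_def by simp
  define psi where "psi x = pc x - e x" for x
  have psiL: "sqi M psi" unfolding psi_def by (rule sqi_diff[OF pcL eL])
  define R where "R x = y0 x - (\<Sum>k\<in>{j..l}. gam k x)" for x
  have RL: "sqi M R" unfolding R_def y0
    by (intro sqi_diff sqi_sum gL pL) (use jl in auto)
  have Rdec: "R x = p j x + (\<Sum>k\<in>{j..l}. p (Suc k) x - p k x - gam k x)" for x
  proof -
    have "(\<Sum>k\<in>{j..l}. p (Suc k) x - p k x - gam k x) = (\<Sum>k\<in>{j..l}. p (Suc k) x - p k x) - (\<Sum>k\<in>{j..l}. gam k x)"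
      by (simp add: sum_subtractf)
    also have "(\<Sum>k\<in>{j..l}. p (Suc k) x - p k x) = p (Suc l) x - p j x"
      using sum_Suc_diff[of j l "\<lambda>k. p k x"] jl by simp
    finally show ?thesis unfolding R_def y0 by simp
  qed
  have ZI: "integrable M (\<lambda>x. R x * psi x)" by (rule sqi_mult_int[OF RL psiL])
  have goal: "AE x in M. real_cond_exp M Fp (\<lambda>x. R x * psi x) x = 0"
  proof (rule Fp.real_cond_exp_charact)
    fix B assume BFp: "B \<in> sets Fp"
    have BFs: "B \<in> sets Fs" using BFp sFp by (auto simp: subalgebra_def)
    have BM: "B \<in> sets M" using BFs sFs by (auto simp: subalgebra_def)
    have BH: "B \<in> sets H" using BFs sHF by (auto simp: subalgebra_def)
    define h where "h x = indicator B x * psi x" for x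
    have hL: "sqi M h" unfolding h_def by (rule sqi_ind[OF psiL BM])
    have termk: "(\<integral>x. h x * (p (Suc k) x - p k x - gam k x) \<partial>M) = 0" if k: "k \<in> {j..l}" for k
    proof -
      interpret Gk: sigma_finite_subalgebra M "G k" using sfs[OF P sG[OF k]] .
      have BG: "B \<in> sets (G k)" using BFs sGF[OF k] by (auto simp: subalgebra_def)
      have eG: "e \<in> borel_measurable (G k)" using measurable_from_subalg[OF sGF[OF k] eFs] .
      have hG: "h \<in> borel_measurable (G k)" unfolding h_def psi_def
        using BG eG pcG[OF k] by measurable
      have DL: "sqi M (\<lambda>x. p (Suc k) x - p k x)" by (rule sqi_diff; rule pL) (use k in auto)
      have "(\<integral>x. h x * (p (Suc k) x - p k x) \<partial>M) = (\<integral>x. h x * real_cond_exp M (G k) (\<lambda>x. p (Suc k) x - p k x) x \<partial>M)"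
        by (rule Gk.real_cond_exp_intg(2)[symmetric]) (use sqi_mult_int[OF hL DL] hG DL in \<open>auto simp: sqi_def\<close>)
      also have "\<dots> = (\<integral>x. h x * gam k x \<partial>M)"
      proof (rule integral_cong_AE)
        show "AE x in M. h x * real_cond_exp M (G k) (\<lambda>x. p (Suc k) x - p k x) x = h x * gam k x"
          using A2[OF k] by eventually_elim simp
      qed (use hL gL[OF k] in \<open>auto simp: sqi_def\<close>)
      finally have eq: "(\<integral>x. h x * (p (Suc k) x - p k x) \<partial>M) = (\<integral>x. h x * gam k x \<partial>M)" .
      have "(\<integral>x. h x * (p (Suc k) x - p k x - gam k x) \<partial>M) = (\<integral>x. h x * (p (Suc k) x - p k x) - h x * gam k x \<partial>M)"
        by (simp add: right_diff_distrib)
      also have "\<dots> = (\<integral>x. h x * (p (Suc k) x - p k x) \<partial>M) - (\<integral>x. h x * gam k x \<partial>M)"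
        by (rule Bochner_Integration.integral_diff[OF sqi_mult_int[OF hL DL] sqi_mult_int[OF hL gL[OF k]]])
      finally show ?thesis using eq by simp
    qed
    have term0: "(\<integral>x. h x * p j x \<partial>M) = 0"
    proof -
      have i1: "integrable M (\<lambda>x. (indicator B x * pc x) * p j x)"
        by (rule sqi_mult_int[OF sqi_ind[OF pcL BM] pjL])
      have i2: "integrable M (\<lambda>x. (indicator B x * e x) * p j x)"
        by (rule sqi_mult_int[OF sqi_ind[OF eL BM] pjL])
      have "(\<integral>x. h x * p j x \<partial>M) = (\<integral>x. (indicator B x * pc x) * p j x - (indicator B x * e x) * p j x \<partial>M)"
        unfolding h_def psi_def by (simp add: algebra_simps)
      also have "\<dots> = (\<integral>x. (indicator B x * pc x) * p j x \<partial>M) - (\<integral>x. (indicator B x * e x) * p j x \<partial>M)"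
        by (rule Bochner_Integration.integral_diff[OF i1 i2])
      also have "(\<integral>x. (indicator B x * e x) * p j x \<partial>M) = (\<integral>x. (indicator B x * e x) * ep x \<partial>M)"
        unfolding ep_def
        by (rule Fs.real_cond_exp_intg(2)[symmetric]) (use i2 BFs eFs pjL in \<open>auto simp: sqi_def\<close>)
      also have "(\<integral>x. (indicator B x * pc x) * p j x \<partial>M) = (\<integral>x. (indicator B x * pc x) * real_cond_exp M H (p j) x \<partial>M)"
        by (rule H.real_cond_exp_intg(2)[symmetric]) (use i1 BH pcH pjL in \<open>auto simp: sqi_def\<close>)
      also have "\<dots> = (\<integral>x. (indicator B x * ep x) * pc x \<partial>M)"
      proof (rule integral_cong_AE)
        show "AE x in M. (indicator B x * pc x) * real_cond_exp M H (p j) x = (indicator B x * ep x) * pc x"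
          using CIc unfolding ep_def by eventually_elim simp
      qed (use pcL epL BM in \<open>auto simp: sqi_def\<close>)
      also have "\<dots> = (\<integral>x. (indicator B x * ep x) * e x \<partial>M)"
        unfolding e_def
        by (rule Fs.real_cond_exp_intg(2)[symmetric])
          (use sqi_mult_int[OF sqi_ind[OF epL BM] pcL] BFs epFs pcL in \<open>auto simp: sqi_def\<close>)
      finally show ?thesis by (simp add: mult_ac)
    qed
    have "(LINT x:B|M. R x * psi x) = (\<integral>x. h x * R x \<partial>M)"
      unfolding set_lebesgue_integral_def h_def by (simp add: mult_ac)
    also have "\<dots> = (\<integral>x. h x * p j x + (\<Sum>k\<in>{j..l}. h x * (p (Suc k) x - p k x - gam k x)) \<partial>M)"
      unfolding Rdec by (simp add: distrib_left sum_distrib_left)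
    also have "\<dots> = (\<integral>x. h x * p j x \<partial>M) + (\<integral>x. (\<Sum>k\<in>{j..l}. h x * (p (Suc k) x - p k x - gam k x)) \<partial>M)"
    proof (rule Bochner_Integration.integral_add)
      show "integrable M (\<lambda>x. h x * p j x)" by (rule sqi_mult_int[OF hL pjL])
      show "integrable M (\<lambda>x. \<Sum>k\<in>{j..l}. h x * (p (Suc k) x - p k x - gam k x))"
        by (rule Bochner_Integration.integrable_sum, rule sqi_mult_int[OF hL])
          (intro sqi_diff pL gL; auto)
    qed
    also have "(\<integral>x. (\<Sum>k\<in>{j..l}. h x * (p (Suc k) x - p k x - gam k x)) \<partial>M)
        = (\<Sum>k\<in>{j..l}. (\<integral>x. h x * (p (Suc k) x - p k x - gam k x) \<partial>M))"
      by (rule Bochner_Integration.integral_sum, rule sqi_mult_int[OF hL]) (intro sqi_diff pL gL; auto)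
    also have "\<dots> = 0" using termk by simp
    finally show "(LINT x:B|M. R x * psi x) = (LINT x:B|M. 0)" using term0 by simp
  qed (use ZI in auto)
  then show ?thesis unfolding R_def psi_def e_def .
qed

lemma hist_space: "space (hist M SX ST X T y IX IT Iy) = space M"
  by (simp add: hist_def space_measure_of_conv)

lemma hist_gens_pow: "({X i k -` A \<inter> space M | i k A. (i, k) \<in> IX \<and> A \<in> sets SX}
    \<union> {T i k -` A \<inter> space M | i k A. (i, k) \<in> IT \<and> A \<in> sets ST}
    \<union> {y i -` A \<inter> space M | i A. i \<in> Iy \<and> A \<in> sets (borel :: real measure)}) \<subseteq> Pow (space M)"
  by auto

lemma hist_sets: "sets (hist M SX ST X T y IX IT Iy) = sigma_sets (space M)
    ({X i k -` A \<inter> space M | i k A. (i, k) \<in> IX \<and> A \<in> sets SX}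
    \<union> {T i k -` A \<inter> space M | i k A. (i, k) \<in> IT \<and> A \<in> sets ST}
    \<union> {y i -` A \<inter> space M | i A. i \<in> Iy \<and> A \<in> sets (borel :: real measure)})"
  unfolding hist_def by (rule sets_measure_of[OF hist_gens_pow])

lemma hist_X: assumes "(i, k) \<in> IX" "X i k \<in> M \<rightarrow>\<^sub>M SX"
  shows "X i k \<in> hist M SX ST X T y IX IT Iy \<rightarrow>\<^sub>M SX"
proof (rule measurableI)
  show "x \<in> space (hist M SX ST X T y IX IT Iy) \<Longrightarrow> X i k x \<in> space SX" for x
    using assms(2) by (auto simp: hist_space measurable_def)
  show "X i k -` A \<inter> space (hist M SX ST X T y IX IT Iy) \<in> sets (hist M SX ST X T y IX IT Iy)" if "A \<in> sets SX" for A
  proof -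
    have "X i k -` A \<inter> space M \<in> {X i k -` A \<inter> space M | i k A. (i, k) \<in> IX \<and> A \<in> sets SX}"
      using that assms(1) by blast
    then show ?thesis unfolding hist_sets hist_space by (intro sigma_sets.Basic UnI1 UnI1)
  qed
qed

lemma hist_T: assumes "(i, k) \<in> IT" "T i k \<in> M \<rightarrow>\<^sub>M ST"
  shows "T i k \<in> hist M SX ST X T y IX IT Iy \<rightarrow>\<^sub>M ST"
proof (rule measurableI)
  show "x \<in> space (hist M SX ST X T y IX IT Iy) \<Longrightarrow> T i k x \<in> space ST" for x
    using assms(2) by (auto simp: hist_space measurable_def)
  show "T i k -` A \<inter> space (hist M SX ST X T y IX IT Iy) \<in> sets (hist M SX ST X T y IX IT Iy)" if "A \<in> sets ST" for A
  proof -
    have "T i k -` A \<inter> space M \<in> {T i k -` A \<inter> space M | i k A. (i, k) \<in> IT \<and> A \<in> sets ST}"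
      using that assms(1) by blast
    then show ?thesis unfolding hist_sets hist_space by (intro sigma_sets.Basic UnI1 UnI2)
  qed
qed

lemma hist_sub:
  assumes "\<And>i k. (i, k) \<in> IX \<Longrightarrow> X i k \<in> M \<rightarrow>\<^sub>M SX"
    and "\<And>i k. (i, k) \<in> IT \<Longrightarrow> T i k \<in> M \<rightarrow>\<^sub>M ST"
    and "\<And>i. i \<in> Iy \<Longrightarrow> y i \<in> borel_measurable M"
  shows "subalgebra M (hist M SX ST X T y IX IT Iy)"
  unfolding subalgebra_def hist_space hist_sets
proof (intro conjI refl sets.sigma_sets_subset subsetI)
  fix s assume "s \<in> {X i k -` A \<inter> space M | i k A. (i, k) \<in> IX \<and> A \<in> sets SX}
    \<union> {T i k -` A \<inter> space M | i k A. (i, k) \<in> IT \<and> A \<in> sets ST}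
    \<union> {y i -` A \<inter> space M | i A. i \<in> Iy \<and> A \<in> sets (borel :: real measure)}"
  then show "s \<in> sets M"
  proof (elim UnE)
    assume "s \<in> {X i k -` A \<inter> space M | i k A. (i, k) \<in> IX \<and> A \<in> sets SX}"
    then obtain i k A where "s = X i k -` A \<inter> space M" "(i, k) \<in> IX" "A \<in> sets SX" by blast
    then show ?thesis using assms(1) by (simp add: measurable_sets)
  next
    assume "s \<in> {T i k -` A \<inter> space M | i k A. (i, k) \<in> IT \<and> A \<in> sets ST}"
    then obtain i k A where "s = T i k -` A \<inter> space M" "(i, k) \<in> IT" "A \<in> sets ST" by blast
    then show ?thesis using assms(2) by (simp add: measurable_sets)
  next
    assume "s \<in> {y i -` A \<inter> space M | i A. i \<in> Iy \<and> A \<in> sets (borel :: real measure)}"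
    then obtain i A where "s = y i -` A \<inter> space M" "i \<in> Iy" "A \<in> sets (borel :: real measure)" by blast
    then show ?thesis using assms(3) by (simp add: measurable_sets)
  qed
qed

lemma hist_mono:
  assumes "IX \<subseteq> IX'" "IT \<subseteq> IT'" "Iy \<subseteq> Iy'"
  shows "subalgebra (hist M SX ST X T y IX' IT' Iy') (hist M SX ST X T y IX IT Iy)"
  unfolding subalgebra_def hist_space hist_sets
  by (intro conjI refl sigma_sets_mono' Un_mono) (use assms in blast)+

lemma vec_comp_meas: "f \<in> borel_measurable N \<Longrightarrow> (\<lambda>x. (f x :: real ^ 'd) $ c) \<in> borel_measurable N"
  by (rule measurable_compose[OF _ borel_measurable_continuous_onI])
     (auto intro: linear_continuous_on bounded_linear_vec_nth)

lemma phiv_meas: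
  assumes pm: "(\<lambda>(x, tau). \<phi> j x tau) \<in> borel_measurable (PiM {1..j} (\<lambda>_. SX) \<Otimes>\<^sub>M PiM {1..j} (\<lambda>_. ST))"
    and Xm: "\<And>k. k \<in> {1..j} \<Longrightarrow> X i k \<in> N \<rightarrow>\<^sub>M SX"
    and Tm: "\<And>k. k \<in> {1..j} \<Longrightarrow> T i k \<in> N \<rightarrow>\<^sub>M ST"
  shows "(\<lambda>\<omega>. phiv \<phi> j (\<lambda>k. X i k \<omega>) (\<lambda>k. T i k \<omega>)) \<in> borel_measurable N"
proof -
  have m: "(\<lambda>\<omega>. (restrict (\<lambda>k. X i k \<omega>) {1..j}, restrict (\<lambda>k. T i k \<omega>) {1..j}))
      \<in> N \<rightarrow>\<^sub>M (PiM {1..j} (\<lambda>_. SX) \<Otimes>\<^sub>M PiM {1..j} (\<lambda>_. ST))"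
    by (intro measurable_Pair measurable_restrict) (use Xm Tm in auto)
  have "(\<lambda>\<omega>. (\<lambda>(x, tau). \<phi> j x tau) (restrict (\<lambda>k. X i k \<omega>) {1..j}, restrict (\<lambda>k. T i k \<omega>) {1..j})) \<in> borel_measurable N"
    by (rule measurable_compose[OF m pm])
  then show ?thesis by (simp add: phiv_def)
qed

lemma pot_meas:
  assumes Ym: "(\<lambda>(tau, \<omega>). Y i tau \<omega>) \<in> borel_measurable (PiM {1..l} (\<lambda>_. ST) \<Otimes>\<^sub>M M)"
    and Tm: "\<And>k. k \<in> {1..l} \<Longrightarrow> T i k \<in> M \<rightarrow>\<^sub>M ST"
    and tau: "tau \<in> UNIV \<rightarrow> space ST"
  shows "pot l Y T i j tau \<in> borel_measurable M"
proof -
  have c: "(\<lambda>\<omega>. splice j (\<lambda>k. T i k \<omega>) tau k) \<in> M \<rightarrow>\<^sub>M ST" if k: "k \<in> {1..l}" for k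
  proof (cases "k < j")
    case True then show ?thesis using Tm[OF k] by (simp add: splice_def)
  next
    case False
    have "tau k \<in> space ST" using tau by auto
    then show ?thesis using False by (simp add: splice_def measurable_const)
  qed
  have m: "(\<lambda>\<omega>. (restrict (splice j (\<lambda>k. T i k \<omega>) tau) {1..l}, \<omega>)) \<in> M \<rightarrow>\<^sub>M (PiM {1..l} (\<lambda>_. ST) \<Otimes>\<^sub>M M)"
    by (intro measurable_Pair measurable_restrict measurable_ident_sets refl) (use c in auto)
  have "(\<lambda>\<omega>. (\<lambda>(tau, \<omega>). Y i tau \<omega>) (restrict (splice j (\<lambda>k. T i k \<omega>) tau) {1..l}, \<omega>)) \<in> borel_measurable M"
    by (rule measurable_compose[OF m Ym])
  then show ?thesis by (simp add: pot_def)
qed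

lemma obs_pot: "obs l Y T i = pot l Y T i (Suc l) tau"
proof -
  have e: "restrict (\<lambda>k. T i k \<omega>) {1..l} = restrict (splice (Suc l) (\<lambda>k. T i k \<omega>) tau) {1..l}" for \<omega>
    by (auto simp: splice_def restrict_def fun_eq_iff)
  show ?thesis unfolding obs_def pot_def by (rule ext) (simp only: e)
qed

theorem lemma2:
  fixes M :: "'a measure" and SX :: "'x measure" and ST :: "'t measure" and PX :: "'x measure"
    and X :: "nat \<Rightarrow> nat \<Rightarrow> 'a \<Rightarrow> 'x" and T :: "nat \<Rightarrow> nat \<Rightarrow> 'a \<Rightarrow> 't"
    and Y :: "nat \<Rightarrow> (nat \<Rightarrow> 't) \<Rightarrow> 'a \<Rightarrow> real"
    and \<phi> :: "nat \<Rightarrow> (nat \<Rightarrow> 'x) \<Rightarrow> (nat \<Rightarrow> 't) \<Rightarrow> real ^ 'd"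
    and \<theta> :: "nat \<Rightarrow> real ^ 'd"
    and t0 :: 't and n l i j :: nat
  assumes P: "prob_space M"
    and t0: "t0 \<in> space ST"
    and X_meas: "\<And>i k. i \<in> {1..n} \<Longrightarrow> k \<in> {1..l} \<Longrightarrow> X i k \<in> M \<rightarrow>\<^sub>M SX"
    and T_meas: "\<And>i k. i \<in> {1..n} \<Longrightarrow> k \<in> {1..l} \<Longrightarrow> T i k \<in> M \<rightarrow>\<^sub>M ST"
    and Y_meas: "\<And>i. i \<in> {1..n} \<Longrightarrow>
        (\<lambda>(tau, \<omega>). Y i tau \<omega>) \<in> borel_measurable (PiM {1..l} (\<lambda>_. ST) \<Otimes>\<^sub>M M)"
    and phi_meas: "\<And>j. j \<in> {1..l} \<Longrightarrow>
        (\<lambda>(x, tau). \<phi> j x tau) \<in> borel_measurable (PiM {1..j} (\<lambda>_. SX) \<Otimes>\<^sub>M PiM {1..j} (\<lambda>_. ST))"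
    and Y_L2: "\<And>i j tau. i \<in> {1..n} \<Longrightarrow> j \<in> {1..Suc l} \<Longrightarrow> tau \<in> UNIV \<rightarrow> space ST \<Longrightarrow>
        integrable M (\<lambda>\<omega>. (pot l Y T i j tau \<omega>)\<^sup>2)"
    and phi_L2: "\<And>i j c. i \<in> {1..n} \<Longrightarrow> j \<in> {1..l} \<Longrightarrow>
        integrable M (\<lambda>\<omega>. (phiv \<phi> j (\<lambda>k. X i k \<omega>) (\<lambda>k. T i k \<omega>) $ c)\<^sup>2)"
    and PX: "prob_space PX" "sets PX = sets SX"
    and X1_iid: "\<And>i A B. i \<in> {1..n} \<Longrightarrow> A \<in> sets SX \<Longrightarrow> B \<in> sets (Fep M SX ST X T (obs l Y T) l i) \<Longrightarrow>
        measure M (X i 1 -` A \<inter> space M \<inter> B) = measure PX A * measure M B"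
    and A1: "\<And>i j. i \<in> {1..n} \<Longrightarrow> j \<in> {1..l} \<Longrightarrow>
        cond_indep M (Fst M SX ST X T (obs l Y T) l i j)
          (sets (sigma (space M) {pot l Y T i j tau -` B \<inter> space M | tau B.
                   tau \<in> UNIV \<rightarrow> space ST \<and> B \<in> sets (borel :: real measure)}))
          (sets (sigma (space M) {T i j -` C \<inter> space M | C. C \<in> sets ST}))"
    and A2_phi0: "\<And>j x tau. j \<in> {1..l} \<Longrightarrow> phiv \<phi> j x (tau(j := t0)) = 0"
    and A2: "\<And>i j. i \<in> {1..n} \<Longrightarrow> j \<in> {1..l} \<Longrightarrow>
        AE \<omega> in M. real_cond_exp M (Gst M SX ST X T (obs l Y T) l i j)
            (\<lambda>\<omega>. pot l Y T i (Suc j) (\<lambda>_. t0) \<omega> - pot l Y T i j (\<lambda>_. t0) \<omega>) \<omega>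
          = \<theta> j \<bullet> phiv \<phi> j (\<lambda>k. X i k \<omega>) (\<lambda>k. T i k \<omega>)"
    and i: "i \<in> {1..n}" and j: "j \<in> {1..l}"
  shows "\<forall>c. AE \<omega> in M.
     real_cond_exp M (Fep M SX ST X T (obs l Y T) l i)
       (\<lambda>\<omega>. (obs l Y T i \<omega>
              - (\<Sum>j'\<in>{j..l}. \<theta> j' \<bullet> phiv \<phi> j' (\<lambda>k. X i k \<omega>) (\<lambda>k. T i k \<omega>)))
            * (phiv \<phi> j (\<lambda>k. X i k \<omega>) (\<lambda>k. T i k \<omega>) $ c
               - real_cond_exp M (Fst M SX ST X T (obs l Y T) l i j)
                   (\<lambda>\<omega>. phiv \<phi> j (\<lambda>k. X i k \<omega>) (\<lambda>k. T i k \<omega>) $ c) \<omega>)) \<omega> = 0"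
proof (intro allI)
  fix c
  interpret prob_space M by (rule P)
  define Fp where "Fp = Fep M SX ST X T (obs l Y T) l i"
  define Fs where "Fs = Fst M SX ST X T (obs l Y T) l i j"
  define G where "G k = Gst M SX ST X T (obs l Y T) l i k" for k
  define FA where "FA = sigma (space M) {pot l Y T i j tau -` B \<inter> space M | tau B.
                   tau \<in> UNIV \<rightarrow> space ST \<and> B \<in> sets (borel :: real measure)}"
  define FB where "FB = sigma (space M) {T i j -` C \<inter> space M | C. C \<in> sets ST}"
  define H where "H = sigma (space M) {g \<inter> b | g b. g \<in> sets Fs \<and> b \<in> sets FB}"
  define p where "p k = pot l Y T i k (\<lambda>_. t0)" for k
  define ph where "ph k \<omega> = phiv \<phi> k (\<lambda>k. X i k \<omega>) (\<lambda>k. T i k \<omega>)" for k \<omega>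
  define pc where "pc \<omega> = ph j \<omega> $ c" for \<omega>
  define gam where "gam k \<omega> = \<theta> k \<bullet> ph k \<omega>" for k \<omega>
  have i1: "1 \<le> i" "i \<le> n" using i by auto
  have j1: "1 \<le> j" "j \<le> l" using j by auto
  have t0s: "(\<lambda>_. t0) \<in> UNIV \<rightarrow> space ST" using t0 by auto
  have Tm: "\<And>k. k \<in> {1..l} \<Longrightarrow> T i k \<in> M \<rightarrow>\<^sub>M ST" using T_meas i by auto
  have Xm: "\<And>k. k \<in> {1..l} \<Longrightarrow> X i k \<in> M \<rightarrow>\<^sub>M SX" using X_meas i by auto
  have potm: "\<And>i' k tau. i' \<in> {1..n} \<Longrightarrow> tau \<in> UNIV \<rightarrow> space ST \<Longrightarrow> pot l Y T i' k tau \<in> borel_measurable M"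
  proof -
    fix i' k and tau :: "nat \<Rightarrow> 't" assume a: "i' \<in> {1..n}" "tau \<in> UNIV \<rightarrow> space ST"
    show "pot l Y T i' k tau \<in> borel_measurable M"
      by (rule pot_meas[where Y=Y and T=T and i=i' and l=l and M=M and ST=ST, OF Y_meas[OF a(1)] T_meas[OF a(1)] a(2)])
  qed
  have obsm: "\<And>i'. i' \<in> {1..n} \<Longrightarrow> obs l Y T i' \<in> borel_measurable M"
    using potm[OF _ t0s] obs_pot by metis
  have pastX: "X i' k \<in> M \<rightarrow>\<^sub>M SX" if "(i', k) \<in> past_idx l i" for i' k
    using that i1 by (intro X_meas) (auto simp: past_idx_def)
  have pastT: "T i' k \<in> M \<rightarrow>\<^sub>M ST" if "(i', k) \<in> past_idx l i" for i' k
    using that i1 by (intro T_meas) (auto simp: past_idx_def)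
  have pasty: "obs l Y T i' \<in> borel_measurable M" if "i' \<in> {1..<i}" for i'
    using that i1 by (intro obsm) auto
  have sFs: "subalgebra M Fs" unfolding Fs_def Fst_def
  proof (rule hist_sub)
    show "X i' k \<in> M \<rightarrow>\<^sub>M SX" if "(i', k) \<in> past_idx l i \<union> {(i, k) |k. 1 \<le> k \<and> k \<le> j}" for i' k
      using that pastX Xm j1 by auto
    show "T i' k \<in> M \<rightarrow>\<^sub>M ST" if "(i', k) \<in> past_idx l i \<union> {(i, k) |k. 1 \<le> k \<and> k < j}" for i' k
      using that pastT Tm j1 by auto
  qed (rule pasty)
  have sFp: "subalgebra Fs Fp" unfolding Fs_def Fp_def Fst_def Fep_def
    by (rule hist_mono) auto
  have sG: "subalgebra M (G k)" if k: "k \<in> {j..l}" for k unfolding G_def Gst_def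
  proof (rule hist_sub)
    show "X i' k' \<in> M \<rightarrow>\<^sub>M SX" if "(i', k') \<in> past_idx l i \<union> {(i, k') |k'. 1 \<le> k' \<and> k' \<le> k}" for i' k'
      using that pastX Xm k by auto
    show "T i' k' \<in> M \<rightarrow>\<^sub>M ST" if "(i', k') \<in> past_idx l i \<union> {(i, k') |k'. 1 \<le> k' \<and> k' \<le> k}" for i' k'
      using that pastT Tm k by auto
  qed (rule pasty)
  have sGF: "subalgebra (G k) Fs" if k: "k \<in> {j..l}" for k unfolding G_def Gst_def Fs_def Fst_def
    by (rule hist_mono) (use k in auto)
  have FAgens: "{pot l Y T i j tau -` B \<inter> space M | tau B. tau \<in> UNIV \<rightarrow> space ST \<and> B \<in> sets (borel :: real measure)} \<subseteq> sets M"
    using potm[OF i] by (auto simp: measurable_sets)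
  have FBgens: "{T i j -` C \<inter> space M | C. C \<in> sets ST} \<subseteq> sets M"
    using Tm[OF j] by (auto simp: measurable_sets)
  have setsFA: "sets FA = sigma_sets (space M) {pot l Y T i j tau -` B \<inter> space M | tau B. tau \<in> UNIV \<rightarrow> space ST \<and> B \<in> sets (borel :: real measure)}"
    unfolding FA_def by (rule sets_measure_of) auto
  have setsFB: "sets FB = sigma_sets (space M) {T i j -` C \<inter> space M | C. C \<in> sets ST}"
    unfolding FB_def by (rule sets_measure_of) auto
  have sFA: "subalgebra M FA" unfolding subalgebra_def setsFA
    using sets.sigma_sets_subset[OF FAgens] by (simp add: FA_def space_measure_of_conv)
  have sFB: "subalgebra M FB" unfolding subalgebra_def setsFB
    using sets.sigma_sets_subset[OF FBgens] by (simp add: FB_def space_measure_of_conv)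
  let ?S = "{g \<inter> b | g b. g \<in> sets Fs \<and> b \<in> sets FB}"
  have GM: "sets Fs \<subseteq> sets M" and BM: "sets FB \<subseteq> sets M"
    using sFs sFB by (auto simp: subalgebra_def)
  have SM: "?S \<subseteq> sets M" using GM BM by auto
  have SP: "?S \<subseteq> Pow (space M)" using SM sets.sets_into_space by blast
  have setsH: "sets H = sigma_sets (space M) ?S" unfolding H_def using SP by (simp add: sets_measure_of)
  have spaceH: "space H = space M" unfolding H_def using SP by (simp add: space_measure_of_conv)
  have sH: "subalgebra M H" unfolding subalgebra_def setsH spaceH
    using SM sets.sigma_sets_subset by blast
  have FsH: "sets Fs \<subseteq> sets H"
  proof
    fix g assume g: "g \<in> sets Fs"
    have "space M \<in> sets FB" using sFB by (metis sets.top subalgebra_def)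
    moreover have "g = g \<inter> space M" using g GM sets.sets_into_space by blast
    ultimately have "g \<in> ?S" using g by blast
    then show "g \<in> sets H" unfolding setsH by blast
  qed
  have FBH: "sets FB \<subseteq> sets H"
  proof
    fix b assume b: "b \<in> sets FB"
    have "space M \<in> sets Fs" using sFs by (metis sets.top subalgebra_def)
    moreover have "b = space M \<inter> b" using b BM sets.sets_into_space by blast
    ultimately have "b \<in> ?S" using b by blast
    then show "b \<in> sets H" unfolding setsH by blast
  qed
  have sHF: "subalgebra H Fs" using sFs FsH spaceH by (simp add: subalgebra_def)
  have sHB: "subalgebra H FB" using sFB FBH spaceH by (simp add: subalgebra_def)
  have pjFA: "p j \<in> borel_measurable FA"
  proof (rule measurableI)
    fix B :: "real set" assume B: "B \<in> sets borel"
    have "p j -` B \<inter> space M \<in> {pot l Y T i j tau -` B \<inter> space M | tau B. tau \<in> UNIV \<rightarrow> space ST \<and> B \<in> sets (borel :: real measure)}"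
      unfolding p_def using B t0s by blast
    then show "p j -` B \<inter> space FA \<in> sets FA"
      unfolding setsFA by (simp add: FA_def space_measure_of_conv)
  qed simp
  have pL: "sqi M (p k)" if k: "k \<in> {j..Suc l}" for k
  proof (rule sqiI)
    show "p k \<in> borel_measurable M" unfolding p_def by (rule potm[OF i t0s])
    show "integrable M (\<lambda>x. (p k x)\<^sup>2)" unfolding p_def by (rule Y_L2[OF i _ t0s]) (use k j1 in auto)
  qed
  have CI: "cond_indep M Fs (sets FA) (sets FB)"
    using A1[OF i j] unfolding Fs_def FA_def FB_def .
  have CIc: "AE x in M. real_cond_exp M H (p j) x = real_cond_exp M Fs (p j) x"
    unfolding H_def by (rule ci_core[OF P sFs sFA sFB CI sqi_int[OF P pL] pjFA]) (use j1 in auto)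
  have phm: "ph k \<in> borel_measurable N" if k: "k \<in> {1..l}"
    and XN: "\<And>k'. k' \<in> {1..k} \<Longrightarrow> X i k' \<in> N \<rightarrow>\<^sub>M SX" and TN: "\<And>k'. k' \<in> {1..k} \<Longrightarrow> T i k' \<in> N \<rightarrow>\<^sub>M ST" for k N
    unfolding ph_def[abs_def] by (rule phiv_meas[where X=X and T=T and i=i and \<phi>=\<phi> and j=k and SX=SX and ST=ST and N=N, OF phi_meas[OF k] XN TN])
  have phM: "ph k \<in> borel_measurable M" if k: "k \<in> {1..l}" for k
    by (rule phm[OF k]) (use k Xm Tm in auto)
  have pcL: "sqi M pc"
  proof (rule sqiI)
    show "pc \<in> borel_measurable M" unfolding pc_def[abs_def] by (rule vec_comp_meas[OF phM[OF j]])
    show "integrable M (\<lambda>x. (pc x)\<^sup>2)" unfolding pc_def ph_def by (rule phi_L2[OF i j])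
  qed
  have pcG: "pc \<in> borel_measurable (G k)" if k: "k \<in> {j..l}" for k
    unfolding pc_def[abs_def]
  proof (rule vec_comp_meas, rule phm[OF j])
    fix k' assume k': "k' \<in> {1..j}"
    show "X i k' \<in> G k \<rightarrow>\<^sub>M SX" unfolding G_def Gst_def
      by (rule hist_X) (use k k' Xm in auto)
    show "T i k' \<in> G k \<rightarrow>\<^sub>M ST" unfolding G_def Gst_def
      by (rule hist_T) (use k k' Tm in auto)
  qed
  have pcH: "pc \<in> borel_measurable H"
    unfolding pc_def[abs_def]
  proof (rule vec_comp_meas, rule phm[OF j])
    fix k' assume k': "k' \<in> {1..j}"
    have "X i k' \<in> Fs \<rightarrow>\<^sub>M SX" unfolding Fs_def Fst_def
      by (rule hist_X) (use k' Xm j1 in auto)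
    then show "X i k' \<in> H \<rightarrow>\<^sub>M SX" by (rule measurable_from_subalg[OF sHF])
    show "T i k' \<in> H \<rightarrow>\<^sub>M ST"
    proof (cases "k' < j")
      case True
      have "T i k' \<in> Fs \<rightarrow>\<^sub>M ST" unfolding Fs_def Fst_def
        by (rule hist_T) (use k' Tm j1 True in auto)
      then show ?thesis by (rule measurable_from_subalg[OF sHF])
    next
      case False
      then have kj: "k' = j" using k' by auto
      have "T i j \<in> FB \<rightarrow>\<^sub>M ST"
      proof (rule measurableI)
        show "x \<in> space FB \<Longrightarrow> T i j x \<in> space ST" for x
          using Tm[OF j] by (auto simp: FB_def space_measure_of_conv measurable_def)
        show "T i j -` C \<inter> space FB \<in> sets FB" if "C \<in> sets ST" for C
          unfolding setsFB using that by (auto simp: FB_def space_measure_of_conv)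
      qed
      then show ?thesis unfolding kj by (rule measurable_from_subalg[OF sHB])
    qed
  qed
  have gL: "sqi M (gam k)" if k: "k \<in> {j..l}" for k
  proof -
    have k1: "k \<in> {1..l}" using k j1 by auto
    have "sqi M (\<lambda>\<omega>. \<Sum>c\<in>UNIV. \<theta> k $ c * ph k \<omega> $ c)"
    proof (intro sqi_sum sqi_cmult sqiI)
      fix c show "(\<lambda>\<omega>. ph k \<omega> $ c) \<in> borel_measurable M" by (rule vec_comp_meas[OF phM[OF k1]])
      show "integrable M (\<lambda>\<omega>. (ph k \<omega> $ c)\<^sup>2)" unfolding ph_def by (rule phi_L2[OF i k1])
    qed
    then show ?thesis unfolding gam_def[abs_def] by (simp add: inner_vec_def)
  qed
  have A2': "AE x in M. real_cond_exp M (G k) (\<lambda>x. p (Suc k) x - p k x) x = gam k x" if k: "k \<in> {j..l}" for k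
    unfolding G_def p_def gam_def ph_def by (rule A2[OF i]) (use k j1 in auto)
  have y0: "\<And>x. obs l Y T i x = p (Suc l) x" unfolding p_def using obs_pot by metis
  have "AE x in M. real_cond_exp M Fp (\<lambda>x. (obs l Y T i x - (\<Sum>k\<in>{j..l}. gam k x)) * (pc x - real_cond_exp M Fs pc x)) x = 0"
    by (rule abstract_main[OF P sFs sFp sH sHF sG sGF pcG pcH pcL pL gL A2' CIc y0 j1(2)])
  then show "AE \<omega> in M.
     real_cond_exp M (Fep M SX ST X T (obs l Y T) l i)
       (\<lambda>\<omega>. (obs l Y T i \<omega>
              - (\<Sum>j'\<in>{j..l}. \<theta> j' \<bullet> phiv \<phi> j' (\<lambda>k. X i k \<omega>) (\<lambda>k. T i k \<omega>)))
            * (phiv \<phi> j (\<lambda>k. X i k \<omega>) (\<lambda>k. T i k \<omega>) $ c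
               - real_cond_exp M (Fst M SX ST X T (obs l Y T) l i j)
                   (\<lambda>\<omega>. phiv \<phi> j (\<lambda>k. X i k \<omega>) (\<lambda>k. T i k \<omega>) $ c) \<omega>)) \<omega> = 0"
    unfolding Fp_def Fs_def gam_def pc_def ph_def .
qed

end
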